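(* Let $\rho$ be a finitary type. The class of all $\rho$-dimensional t-algebras equals $\mathrm{Mod}(\mathrm{Str}(\rho))$ and is an Et-variety of type $\rho^\star$.
   Context: $\mathbb N=\{1,2,\dots\}$. A thread on $A$ is $s\in A^{\mathbb N}$; $r[a_1,\dots,a_n]$ is the thread with entries $a_i$ for $i\le n$ and $r_i$ for $i>n$; $r\equiv_{\mathbb N}s$ iff $\{i:r_i\neq s_i\}$ is finite, $[s]_{\mathbb N}$ its class. A trace on $A$ is a nonempty union of $\equiv_{\mathbb N}$-classes. A t-algebra of type $\tau$ and trace $\mathsf a$ is $(A,\mathsf a,\sigma^{\mathbf A})_{\sigma\in\tau}$ with $\sigma^{\mathbf A}:\mathsf a\to A$ arbitrary. t-subalgebra: $(B,\mathsf b,\sigma^{\mathbf A}|_{\mathsf b})$ with $B\subseteq A$, $\mathsf b\subseteq\mathsf a$ a trace on $B$, $\sigma^{\mathbf A}(\mathsf b)\subseteq B$. t-homomorphism: $f:A\to B$ with $f^{\mathbb N}(\mathsf a)\subseteq\mathsf b$ (coordinatewise) and $f\circ\sigma^{\mathbf A}=\sigma^{\mathbf B}\circ f^{\mathbb N}$; onto if $f$ and $f^{\mathbb N}:\mathsf a\to\mathsf b$ are surjective. t-product: universe $\prod_jA_j$, trace $\prod_j\mathsf a_j$ (with $(s^j)_j$ identified with the thread of entries $(s^j_k)_j$), operations componentwise. t-variety: closed under t-homomorphic images, t-subalgebras, t-products. $\tau$-terms: least set containing $\mathsf e_1,\mathsf e_2,\dots$ and $\sigma(t_1,\dots,t_n,\mathsf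 e_{n+1},\dots)$; term operations $\mathsf e_i^{\mathbf A}(s)=s_i$, $\sigma(t_1,\dots,t_n,\mathsf e_{n+1},\dots)^{\mathbf A}(s)=\sigma^{\mathbf A}(s[t_1^{\mathbf A}(s),\dots,t_n^{\mathbf A}(s)])$; $\theta_{\mathbf A}=\{(t,u):t^{\mathbf A}=u^{\mathbf A}\}$; $\mathrm{Mod}(\Sigma)=\{\mathbf A:\Sigma\subseteq\theta_{\mathbf A}\}$. $\mathbf A_{\bar s}$: universe $A_{\bar s}=\{t^{\mathbf A}(s)\}$, trace $[s]_{\mathbb N}\cap(A_{\bar s})^{\mathbb N}$. An Et-variety is a t-variety $K$ such that $\mathbf A_{\bar s}\in K$ for all $s$ in the trace of $\mathbf A$ implies $\mathbf A\in K$. A finitary type is $\rho=(\rho_n)_{n\ge0}$, disjoint sets of $n$-ary symbols; $\rho^\star=\bigcup_n\rho_n$, regarded as a type of t-algebras. A t-algebra $\mathbf A$ of type $\rho^\star$ and trace $\mathsf a$ is $\rho$-dimensional if for every $\sigma\in\rho_n$ and all $s,u\in\mathsf a$ with $s\equiv_{\mathbb N}u$ and $s_i=u_i$ for all $i\le n$, $\sigma^{\mathbf A}(s)=\sigma^{\mathbf A}(u)$. Let $F_\rho(I)$ be the $\rho$-terms over variables $I=\{v_1,v_2,\dots\}$. Define $(-)^\star:F_\rho(I)\to T_{\rho^\star}$ by $v_i^\star=\mathsf e_i$, $\sigma(p_1,\dots,p_n)^\star=\sigma(p_1^\star,\dots,p_n^\star,\mathsf e_{n+1},\mathsf e_{n+2},\dots)$,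 and $(-)^\bullet:T_{\rho^\star}\to F_\rho(I)$ by $\mathsf e_i^\bullet=v_i$ and, for $\sigma\in\rho_n$ and $t=\sigma(t_1,\dots,t_k,\mathsf e_{k+1},\dots)$: $t^\bullet=\sigma(t_1^\bullet,\dots,t_k^\bullet,v_{k+1},\dots,v_n)$ if $k\le n$, and $t^\bullet=\sigma(t_1^\bullet,\dots,t_n^\bullet)$ if $k>n$. $\mathrm{Str}(\rho)$ is the set of $\rho^\star$-identities $((t^\bullet)^\star,t)$ for $t\in T_{\rho^\star}$ not in the image of $(-)^\star$. *)

theory Defs
  imports "HOL-Library.FuncSet"
begin

(* Conventions: the paper's index set N = {1,2,...} is represented 0-based by nat:
   thread entry s_i (i >= 1) is  s (i - 1).  Variable e_i / v_i is  Var (i-1) / FV (i-1). *)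

definition threads :: "'a set \<Rightarrow> (nat \<Rightarrow> 'a) set" where
  "threads A = {s. \<forall>i. s i \<in> A}"

definition eqN :: "(nat \<Rightarrow> 'a) \<Rightarrow> (nat \<Rightarrow> 'a) \<Rightarrow> bool" where
  "eqN r s \<longleftrightarrow> finite {i. r i \<noteq> s i}"

definition is_trace :: "'a set \<Rightarrow> (nat \<Rightarrow> 'a) set \<Rightarrow> bool" where
  "is_trace A a \<longleftrightarrow> a \<noteq> {} \<and> a \<subseteq> threads A \<and>
     (\<forall>s\<in>a. \<forall>r\<in>threads A. eqN r s \<longrightarrow> r \<in> a)"

definition upd :: "(nat \<Rightarrow> 'a) \<Rightarrow> 'a list \<Rightarrow> nat \<Rightarrow> 'a" where
  "upd s xs = (\<lambda>i. if i < length xs then xs ! i else s i)"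

record ('a, 'f) talg =
  tcar :: "'a set"
  ttr :: "(nat \<Rightarrow> 'a) set"
  tops :: "'f \<Rightarrow> (nat \<Rightarrow> 'a) \<Rightarrow> 'a"

text \<open>t-algebra of type tau (a set of operation symbols); each operation is
  a map from the trace to the universe (its values outside the trace are irrelevant).\<close>
definition is_talg :: "'f set \<Rightarrow> ('a, 'f) talg \<Rightarrow> bool" where
  "is_talg \<tau> A \<longleftrightarrow> is_trace (tcar A) (ttr A) \<and>
     (\<forall>\<sigma>\<in>\<tau>. \<forall>s\<in>ttr A. tops A \<sigma> s \<in> tcar A)"

definition t_subalg :: "'f set \<Rightarrow> ('a, 'f) talg \<Rightarrow> ('a, 'f) talg \<Rightarrow> bool" where
  "t_subalg \<tau> B A \<longleftrightarrow> is_talg \<tau> A \<and> tcar B \<subseteq> tcar A \<and> is_trace (tcar B) (ttr B) \<and>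
     ttr B \<subseteq> ttr A \<and> (\<forall>\<sigma>\<in>\<tau>. \<forall>s\<in>ttr B. tops A \<sigma> s \<in> tcar B) \<and>
     (\<forall>\<sigma>\<in>\<tau>. \<forall>s\<in>ttr B. tops B \<sigma> s = tops A \<sigma> s)"

definition t_hom :: "'f set \<Rightarrow> ('a, 'f) talg \<Rightarrow> ('b, 'f) talg \<Rightarrow> ('a \<Rightarrow> 'b) \<Rightarrow> bool" where
  "t_hom \<tau> A B f \<longleftrightarrow> (\<forall>x\<in>tcar A. f x \<in> tcar B) \<and> (\<forall>s\<in>ttr A. f \<circ> s \<in> ttr B) \<and>
     (\<forall>\<sigma>\<in>\<tau>. \<forall>s\<in>ttr A. f (tops A \<sigma> s) = tops B \<sigma> (f \<circ> s))"

definition t_hom_onto :: "'f set \<Rightarrow> ('a, 'f) talg \<Rightarrow> ('b, 'f) talg \<Rightarrow> ('a \<Rightarrow> 'b) \<Rightarrow> bool" where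
  "t_hom_onto \<tau> A B f \<longleftrightarrow> t_hom \<tau> A B f \<and> f ` tcar A = tcar B \<and>
     (\<lambda>s. f \<circ> s) ` ttr A = ttr B"

definition t_prod :: "'i set \<Rightarrow> ('i \<Rightarrow> ('a, 'f) talg) \<Rightarrow> ('i \<Rightarrow> 'a, 'f) talg" where
  "t_prod I F = \<lparr> tcar = PiE I (\<lambda>j. tcar (F j)),
      ttr = {s. (\<forall>k. s k \<in> extensional I) \<and> (\<forall>j\<in>I. (\<lambda>k. s k j) \<in> ttr (F j))},
      tops = (\<lambda>\<sigma> s. (\<lambda>j. if j \<in> I then tops (F j) \<sigma> (\<lambda>k. s k j) else undefined)) \<rparr>"

text \<open>tau-terms: Op \<sigma> [t_1,...,t_n] stands for \<sigma>(t_1,...,t_n,e_{n+1},e_{n+2},...).\<close>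
datatype 'f tterm = Var nat | Op 'f "'f tterm list"

fun wf_tterm :: "'f set \<Rightarrow> 'f tterm \<Rightarrow> bool" where
  "wf_tterm \<tau> (Var i) = True"
| "wf_tterm \<tau> (Op \<sigma> ts) = (\<sigma> \<in> \<tau> \<and> (\<forall>t\<in>set ts. wf_tterm \<tau> t))"

fun teval :: "('a, 'f) talg \<Rightarrow> 'f tterm \<Rightarrow> (nat \<Rightarrow> 'a) \<Rightarrow> 'a" where
  "teval A (Var i) s = s i"
| "teval A (Op \<sigma> ts) s = tops A \<sigma> (upd s (map (\<lambda>t. teval A t s) ts))"

definition Mod :: "'f set \<Rightarrow> ('f tterm \<times> 'f tterm) set \<Rightarrow> ('a, 'f) talg \<Rightarrow> bool" where
  "Mod \<tau> \<Sigma> A \<longleftrightarrow> is_talg \<tau> A \<and>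
     (\<forall>(t, u)\<in>\<Sigma>. \<forall>s\<in>ttr A. teval A t s = teval A u s)"

definition gen_alg :: "'f set \<Rightarrow> ('a, 'f) talg \<Rightarrow> (nat \<Rightarrow> 'a) \<Rightarrow> ('a, 'f) talg" where
  "gen_alg \<tau> A s = (let B = {teval A t s | t. wf_tterm \<tau> t} in
     \<lparr> tcar = B, ttr = {r. eqN r s \<and> r \<in> threads (tcar A)} \<inter> threads B, tops = tops A \<rparr>)"

text \<open>Finitary type rho: a set S of symbols with arities ar; rho_n = {\<sigma>\<in>S. ar \<sigma> = n},
  rho* = S.\<close>
definition rho_dim :: "'f set \<Rightarrow> ('f \<Rightarrow> nat) \<Rightarrow> ('a, 'f) talg \<Rightarrow> bool" where
  "rho_dim S ar A \<longleftrightarrow> is_talg S A \<and>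
     (\<forall>\<sigma>\<in>S. \<forall>s\<in>ttr A. \<forall>u\<in>ttr A. eqN s u \<and> (\<forall>i < ar \<sigma>. s i = u i) \<longrightarrow>
        tops A \<sigma> s = tops A \<sigma> u)"

datatype 'f fterm = FV nat | FApp 'f "'f fterm list"

fun wf_fterm :: "'f set \<Rightarrow> ('f \<Rightarrow> nat) \<Rightarrow> 'f fterm \<Rightarrow> bool" where
  "wf_fterm S ar (FV i) = True"
| "wf_fterm S ar (FApp \<sigma> ps) =
     (\<sigma> \<in> S \<and> length ps = ar \<sigma> \<and> (\<forall>p\<in>set ps. wf_fterm S ar p))"

fun star :: "'f fterm \<Rightarrow> 'f tterm" where
  "star (FV i) = Var i"
| "star (FApp \<sigma> ps) = Op \<sigma> (map star ps)"

fun bullet :: "('f \<Rightarrow> nat) \<Rightarrow> 'f tterm \<Rightarrow> 'f fterm" where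
  "bullet ar (Var i) = FV i"
| "bullet ar (Op \<sigma> ts) =
     (if length ts \<le> ar \<sigma>
      then FApp \<sigma> (map (bullet ar) ts @ map FV [length ts..<ar \<sigma>])
      else FApp \<sigma> (take (ar \<sigma>) (map (bullet ar) ts)))"

definition Str :: "'f set \<Rightarrow> ('f \<Rightarrow> nat) \<Rightarrow> ('f tterm \<times> 'f tterm) set" where
  "Str S ar = {(star (bullet ar t), t) | t. wf_tterm S t \<and>
                 t \<notin> star ` {p. wf_fterm S ar p}}"

end

theory Submission
  imports Defs
begin

lemma trace_closed:
  "is_trace A a \<Longrightarrow> s \<in> a \<Longrightarrow> r \<in> threads A \<Longrightarrow> eqN r s \<Longrightarrow> r \<in> a"
  unfolding is_trace_def by blast

lemma trace_threads: "is_trace A a \<Longrightarrow> s \<in> a \<Longrightarrow> s i \<in> A"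
  unfolding is_trace_def threads_def by blast

lemma upd_in:
  assumes "is_trace A a" "s \<in> a" "set xs \<subseteq> A"
  shows "upd s xs \<in> a"
proof (rule trace_closed[OF assms(1,2)])
  show "upd s xs \<in> threads A"
    using assms trace_threads[OF assms(1,2)] unfolding threads_def upd_def
    by (auto simp: subset_iff)
  have "{i. upd s xs i \<noteq> s i} \<subseteq> {..<length xs}" unfolding upd_def by auto
  then show "eqN (upd s xs) s" unfolding eqN_def using finite_subset by blast
qed

definition shiftN :: "nat \<Rightarrow> nat \<Rightarrow> (nat \<Rightarrow> 'a) \<Rightarrow> nat \<Rightarrow> 'a" where
  "shiftN m N x = (\<lambda>i. if m \<le> i \<and> i < N then x (i + N) else x i)"

lemma shift_in:
  assumes "is_trace A a" "s \<in> a"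
  shows "shiftN m N s \<in> a"
proof (rule trace_closed[OF assms(1,2)])
  show "shiftN m N s \<in> threads A"
    using trace_threads[OF assms(1,2)] unfolding threads_def shiftN_def by auto
  have "{i. shiftN m N s i \<noteq> s i} \<subseteq> {..<N}" unfolding shiftN_def by auto
  then show "eqN (shiftN m N s) s" unfolding eqN_def using finite_subset by blast
qed

lemma shift_eqN: "eqN (shiftN m N s) s"
proof -
  have "{i. shiftN m N s i \<noteq> s i} \<subseteq> {..<N}" unfolding shiftN_def by auto
  then show ?thesis unfolding eqN_def using finite_subset by blast
qed

lemma shift_eq:
  "(\<forall>i<m. s i = u i) \<Longrightarrow> (\<forall>i\<ge>N. s i = u i) \<Longrightarrow> shiftN m N s = shiftN m N u"
  unfolding shiftN_def by (auto simp: fun_eq_iff)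

lemma eqN_bound: "eqN s u \<Longrightarrow> \<exists>N. \<forall>i\<ge>N. s i = u i"
proof -
  assume "eqN s u"
  then obtain k where "{i. s i \<noteq> u i} \<subseteq> {..<k}"
    unfolding eqN_def finite_nat_set_iff_bounded by blast
  then show ?thesis by (metis (mono_tags, lifting) lessThan_iff mem_Collect_eq not_le subsetD)
qed

lemma rho_dim_shift:
  assumes "rho_dim S ar A" "\<sigma> \<in> S" "s \<in> ttr A"
  shows "tops A \<sigma> (shiftN (ar \<sigma>) N s) = tops A \<sigma> s"
proof -
  have tr: "is_trace (tcar A) (ttr A)" using assms(1) unfolding rho_dim_def is_talg_def by blast
  have "\<forall>i<ar \<sigma>. shiftN (ar \<sigma>) N s i = s i" unfolding shiftN_def by auto
  then show ?thesis using assms(1) assms(2,3) shift_in[OF tr assms(3)] shift_eqN[of "ar \<sigma>" N s]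
    unfolding rho_dim_def by blast
qed

lemma dim_crit:
  assumes "is_talg S A"
    and "\<And>\<sigma> s N. \<sigma> \<in> S \<Longrightarrow> s \<in> ttr A \<Longrightarrow> N > ar \<sigma> \<Longrightarrow>
           tops A \<sigma> (shiftN (ar \<sigma>) N s) = tops A \<sigma> s"
  shows "rho_dim S ar A"
  unfolding rho_dim_def
proof (intro conjI assms(1) ballI impI)
  fix \<sigma> s u assume h: "\<sigma> \<in> S" "s \<in> ttr A" "u \<in> ttr A" "eqN s u \<and> (\<forall>i<ar \<sigma>. s i = u i)"
  then obtain N0 where N0: "\<forall>i\<ge>N0. s i = u i" using eqN_bound by blast
  define N where "N = N0 + Suc (ar \<sigma>)"
  have "shiftN (ar \<sigma>) N s = shiftN (ar \<sigma>) N u"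
    using h N0 by (intro shift_eq) (auto simp: N_def)
  moreover have "N > ar \<sigma>" by (simp add: N_def)
  ultimately show "tops A \<sigma> s = tops A \<sigma> u" using assms(2) h by metis
qed

lemma teval_in:
  assumes "is_talg S A" "s \<in> ttr A" "wf_tterm S t"
  shows "teval A t s \<in> tcar A"
  using assms(3)
proof (induction t)
  case (Var i) then show ?case using assms trace_threads unfolding is_talg_def by auto
next
  case (Op \<sigma> ts)
  have "upd s (map (\<lambda>t. teval A t s) ts) \<in> ttr A"
    using Op assms by (intro upd_in) (auto simp: is_talg_def)
  then show ?case using Op assms unfolding is_talg_def by auto
qed

lemma main_eq:
  assumes "rho_dim S ar A" "s \<in> ttr A" "wf_tterm S t"
  shows "teval A (star (bullet ar t)) s = teval A t s"
  using assms(3)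
proof (induction t)
  case (Var i) then show ?case by simp
next
  case (Op \<sigma> ts)
  have talg: "is_talg S A" using assms unfolding rho_dim_def by blast
  have tr: "is_trace (tcar A) (ttr A)" using talg unfolding is_talg_def by blast
  have IH: "\<And>t. t \<in> set ts \<Longrightarrow> teval A (star (bullet ar t)) s = teval A t s"
    using Op by auto
  show ?case
  proof (cases "length ts \<le> ar \<sigma>")
    case True
    have "upd s (map (\<lambda>t. teval A t s) (map star (map (bullet ar) ts @ map FV [length ts..<ar \<sigma>])))
        = upd s (map (\<lambda>t. teval A t s) ts)"
      using IH True by (auto simp: upd_def fun_eq_iff nth_append)
    then show ?thesis using True by simp
  next
    case False
    have e1: "map (\<lambda>t. teval A t s) (map star (take (ar \<sigma>) (map (bullet ar) ts)))
        = take (ar \<sigma>) (map (\<lambda>t. teval A t s) ts)"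
      using IH by (auto simp: take_map dest: in_set_takeD)
    define x where "x = upd s (take (ar \<sigma>) (map (\<lambda>t. teval A t s) ts))"
    define y where "y = upd s (map (\<lambda>t. teval A t s) ts)"
    have vals: "set (map (\<lambda>t. teval A t s) ts) \<subseteq> tcar A"
      using Op.prems talg assms(2) teval_in[of S A s] by auto
    have xin: "x \<in> ttr A" unfolding x_def using vals
      by (intro upd_in[OF tr assms(2)]) (meson order_trans set_take_subset)
    have yin: "y \<in> ttr A" unfolding y_def using vals by (intro upd_in[OF tr assms(2)])
    have "{i. x i \<noteq> y i} \<subseteq> {..<length ts}" unfolding x_def y_def upd_def by auto
    then have "eqN x y" unfolding eqN_def using finite_subset by blast
    moreover have "\<forall>i<ar \<sigma>. x i = y i" using False unfolding x_def y_def upd_def by auto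
    ultimately have "tops A \<sigma> x = tops A \<sigma> y"
      using assms(1) xin yin Op.prems unfolding rho_dim_def by auto
    then show ?thesis using False e1 by (simp add: x_def y_def)
  qed
qed


lemma part1_rev:
  assumes "Mod S (Str S ar) A"
  shows "rho_dim S ar A"
proof (rule dim_crit)
  show talg: "is_talg S A" using assms unfolding Mod_def by blast
  fix \<sigma> s N assume h: "\<sigma> \<in> S" "s \<in> ttr A" "ar \<sigma> < N"
  define t where "t = Op \<sigma> (map (\<lambda>i. Var (if i < ar \<sigma> then i else i + N)) [0..<N])"
  have wf: "wf_tterm S t" using h by (auto simp: t_def)
  have nim: "t \<notin> star ` {p. wf_fterm S ar p}"
  proof
    assume "t \<in> star ` {p. wf_fterm S ar p}"
    then obtain p where p: "wf_fterm S ar p" "t = star p" by blast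
    show False
    proof (cases p)
      case (FV i) then show ?thesis using p by (simp add: t_def)
    next
      case (FApp \<sigma>' ps)
      then show ?thesis using p h(3) by (auto simp: t_def dest: arg_cong[of _ _ length])
    qed
  qed
  have "(star (bullet ar t), t) \<in> Str S ar" unfolding Str_def using wf nim by blast
  then have eq: "teval A (star (bullet ar t)) s = teval A t s"
    using assms h(2) unfolding Mod_def by fastforce
  have e1: "teval A t s = tops A \<sigma> (shiftN (ar \<sigma>) N s)"
    unfolding t_def by (auto simp: upd_def shiftN_def intro!: arg_cong[where f="tops A \<sigma>"])
  have e2: "teval A (star (bullet ar t)) s = tops A \<sigma> s"
    using h(3) unfolding t_def
    by (auto simp: upd_def take_map intro!: arg_cong[where f="tops A \<sigma>"])
  show "tops A \<sigma> (shiftN (ar \<sigma>) N s) = tops A \<sigma> s" using eq e1 e2 by simp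
qed

lemma part1_fwd:
  assumes "rho_dim S ar A"
  shows "Mod S (Str S ar) A"
  unfolding Mod_def
proof (intro conjI)
  show "is_talg S A" using assms unfolding rho_dim_def by blast
  show "\<forall>(t, u)\<in>Str S ar. \<forall>s\<in>ttr A. teval A t s = teval A u s"
    unfolding Str_def using main_eq[OF assms] by auto
qed

lemma part2:
  assumes A: "rho_dim S ar A" and B: "is_talg S B" and f: "t_hom_onto S A B f"
  shows "rho_dim S ar B"
proof (rule dim_crit[OF B])
  fix \<sigma> s' N assume h: "\<sigma> \<in> S" "s' \<in> ttr B" "ar \<sigma> < N"
  obtain s where s: "s \<in> ttr A" "s' = f \<circ> s" using f h(2) unfolding t_hom_onto_def by blast
  have tr: "is_trace (tcar A) (ttr A)" using A unfolding rho_dim_def is_talg_def by blast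
  have hom: "\<And>r. r \<in> ttr A \<Longrightarrow> f (tops A \<sigma> r) = tops B \<sigma> (f \<circ> r)"
    using f h(1) unfolding t_hom_onto_def t_hom_def by blast
  have c: "shiftN (ar \<sigma>) N s' = f \<circ> shiftN (ar \<sigma>) N s"
    unfolding s shiftN_def by (auto simp: fun_eq_iff)
  have "tops B \<sigma> (shiftN (ar \<sigma>) N s') = f (tops A \<sigma> (shiftN (ar \<sigma>) N s))"
    using hom[OF shift_in[OF tr s(1)]] c by simp
  also have "\<dots> = f (tops A \<sigma> s)" using rho_dim_shift[OF A h(1) s(1)] by simp
  also have "\<dots> = tops B \<sigma> s'" using hom[OF s(1)] s(2) by simp
  finally show "tops B \<sigma> (shiftN (ar \<sigma>) N s') = tops B \<sigma> s'" .
qed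

lemma part3:
  assumes A: "rho_dim S ar A" and B: "t_subalg S B A"
  shows "rho_dim S ar B"
  unfolding rho_dim_def
proof (intro conjI ballI impI)
  show "is_talg S B" using B unfolding t_subalg_def is_talg_def by auto
  fix \<sigma> s u assume h: "\<sigma> \<in> S" "s \<in> ttr B" "u \<in> ttr B" "eqN s u \<and> (\<forall>i<ar \<sigma>. s i = u i)"
  have "s \<in> ttr A" "u \<in> ttr A" using B h unfolding t_subalg_def by auto
  then have "tops A \<sigma> s = tops A \<sigma> u" using A h unfolding rho_dim_def by blast
  then show "tops B \<sigma> s = tops B \<sigma> u" using B h unfolding t_subalg_def by auto
qed

lemma prod_talg:
  assumes "\<forall>j\<in>I. is_talg S (F j)"
  shows "is_talg S (t_prod I F)"
  unfolding is_talg_def is_trace_def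
proof (intro conjI ballI)
  have ttrI: "\<And>s. s \<in> ttr (t_prod I F) \<longleftrightarrow> (\<forall>k. s k \<in> extensional I) \<and> (\<forall>j\<in>I. (\<lambda>k. s k j) \<in> ttr (F j))"
    unfolding t_prod_def by simp
  have car: "tcar (t_prod I F) = PiE I (\<lambda>j. tcar (F j))" unfolding t_prod_def by simp
  have opsI: "\<And>\<sigma> s. tops (t_prod I F) \<sigma> s = (\<lambda>j. if j \<in> I then tops (F j) \<sigma> (\<lambda>k. s k j) else undefined)"
    unfolding t_prod_def by simp
  have trj: "\<And>j. j \<in> I \<Longrightarrow> is_trace (tcar (F j)) (ttr (F j))" using assms unfolding is_talg_def by blast
  define s0 where "s0 = (\<lambda>k j. if j \<in> I then (SOME x. x \<in> ttr (F j)) k else undefined)"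
  have ne: "\<And>j. j \<in> I \<Longrightarrow> (SOME x. x \<in> ttr (F j)) \<in> ttr (F j)"
    using trj unfolding is_trace_def by (simp add: some_in_eq)
  have "\<And>j. j \<in> I \<Longrightarrow> (\<lambda>k. s0 k j) = (SOME x. x \<in> ttr (F j))" unfolding s0_def by auto
  then have "s0 \<in> ttr (t_prod I F)" unfolding ttrI using ne by (auto simp: s0_def extensional_def)
  then show "ttr (t_prod I F) \<noteq> {}" by blast
  have comp: "\<And>s j k. s \<in> ttr (t_prod I F) \<Longrightarrow> j \<in> I \<Longrightarrow> s k j \<in> tcar (F j)"
  proof -
    fix s j k assume "s \<in> ttr (t_prod I F)" "j \<in> I"
    then have "(\<lambda>k. s k j) \<in> ttr (F j)" unfolding ttrI by blast
    then show "s k j \<in> tcar (F j)" using trace_threads[OF trj[OF \<open>j \<in> I\<close>]] by blast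
  qed
  show "ttr (t_prod I F) \<subseteq> threads (tcar (t_prod I F))"
  proof
    fix s assume s: "s \<in> ttr (t_prod I F)"
    have "\<And>k. s k \<in> PiE I (\<lambda>j. tcar (F j))"
      using s comp unfolding ttrI PiE_iff by blast
    then show "s \<in> threads (tcar (t_prod I F))" unfolding threads_def car by blast
  qed
  show "\<And>s r. s \<in> ttr (t_prod I F) \<Longrightarrow> r \<in> threads (tcar (t_prod I F)) \<Longrightarrow> eqN r s \<longrightarrow> r \<in> ttr (t_prod I F)"
  proof
    fix s r assume s: "s \<in> ttr (t_prod I F)" and r: "r \<in> threads (tcar (t_prod I F))" and e: "eqN r s"
    have rk: "\<And>k. r k \<in> PiE I (\<lambda>j. tcar (F j))" using r unfolding threads_def car by blast
    have "\<And>j. j \<in> I \<Longrightarrow> (\<lambda>k. r k j) \<in> ttr (F j)"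
    proof -
      fix j assume j: "j \<in> I"
      show "(\<lambda>k. r k j) \<in> ttr (F j)"
      proof (rule trace_closed[OF trj[OF j]])
        show "(\<lambda>k. s k j) \<in> ttr (F j)" using s j unfolding ttrI by blast
        show "(\<lambda>k. r k j) \<in> threads (tcar (F j))" using rk j unfolding threads_def PiE_iff by blast
        have "{k. r k j \<noteq> s k j} \<subseteq> {k. r k \<noteq> s k}" by auto
        then show "eqN (\<lambda>k. r k j) (\<lambda>k. s k j)" using e unfolding eqN_def using finite_subset by blast
      qed
    qed
    moreover have "\<And>k. r k \<in> extensional I" using rk unfolding PiE_iff by blast
    ultimately show "r \<in> ttr (t_prod I F)" unfolding ttrI by blast
  qed
  fix \<sigma> s assume h: "\<sigma> \<in> S" "s \<in> ttr (t_prod I F)"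
  have "\<And>j. j \<in> I \<Longrightarrow> tops (F j) \<sigma> (\<lambda>k. s k j) \<in> tcar (F j)"
    using h assms unfolding ttrI is_talg_def by blast
  then show "tops (t_prod I F) \<sigma> s \<in> tcar (t_prod I F)"
    unfolding opsI car PiE_iff extensional_def by auto
qed


lemma part4:
  assumes "\<forall>j\<in>I. rho_dim S ar (F j)"
  shows "rho_dim S ar (t_prod I F)"
proof (rule dim_crit)
  have "\<forall>j\<in>I. is_talg S (F j)" using assms unfolding rho_dim_def by blast
  then show "is_talg S (t_prod I F)" by (rule prod_talg)
  fix \<sigma> s N assume h: "\<sigma> \<in> S" "s \<in> ttr (t_prod I F)" "ar \<sigma> < N"
  have ttrI: "\<And>s. s \<in> ttr (t_prod I F) \<longleftrightarrow> (\<forall>k. s k \<in> extensional I) \<and> (\<forall>j\<in>I. (\<lambda>k. s k j) \<in> ttr (F j))"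
    unfolding t_prod_def by simp
  have opsI: "\<And>\<sigma> s. tops (t_prod I F) \<sigma> s = (\<lambda>j. if j \<in> I then tops (F j) \<sigma> (\<lambda>k. s k j) else undefined)"
    unfolding t_prod_def by simp
  have *: "\<And>j. j \<in> I \<Longrightarrow> tops (F j) \<sigma> (\<lambda>k. shiftN (ar \<sigma>) N s k j) = tops (F j) \<sigma> (\<lambda>k. s k j)"
  proof -
    fix j assume j: "j \<in> I"
    have e: "(\<lambda>k. shiftN (ar \<sigma>) N s k j) = shiftN (ar \<sigma>) N (\<lambda>k. s k j)"
      unfolding shiftN_def by (rule ext) simp
    have "(\<lambda>k. s k j) \<in> ttr (F j)" using h(2) j unfolding ttrI by blast
    from rho_dim_shift[OF assms[rule_format, OF j] h(1) this, of N]
    show "tops (F j) \<sigma> (\<lambda>k. shiftN (ar \<sigma>) N s k j) = tops (F j) \<sigma> (\<lambda>k. s k j)"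
      unfolding e .
  qed
  show "tops (t_prod I F) \<sigma> (shiftN (ar \<sigma>) N s) = tops (t_prod I F) \<sigma> s"
    unfolding opsI using * by (intro ext) simp
qed


lemma part5:
  assumes A: "is_talg S A" and G: "\<forall>s\<in>ttr A. rho_dim S ar (gen_alg S A s)"
  shows "rho_dim S ar A"
proof (rule dim_crit[OF A])
  fix \<sigma> s N assume h: "\<sigma> \<in> S" "s \<in> ttr A" "ar \<sigma> < N"
  have tr: "is_trace (tcar A) (ttr A)" using A unfolding is_talg_def by blast
  have "s \<in> ttr (gen_alg S A s)"
  proof -
    have "eqN s s" unfolding eqN_def by simp
    moreover have "s \<in> threads (tcar A)" using tr h(2) unfolding is_trace_def by blast
    moreover have "s \<in> threads {teval A t s | t. wf_tterm S t}"
      unfolding threads_def by (auto intro!: exI[of _ "Var _"])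
    ultimately show ?thesis unfolding gen_alg_def Let_def by simp
  qed
  from rho_dim_shift[OF G[rule_format, OF h(2)] h(1) this]
  show "tops A \<sigma> (shiftN (ar \<sigma>) N s) = tops A \<sigma> s"
    by (simp add: gen_alg_def Let_def)
qed

theorem mainTheorem12:
  fixes S :: "'f set" and ar :: "'f \<Rightarrow> nat"
  shows
    \<comment> \<open>the class of rho-dimensional t-algebras equals Mod(Str(rho))\<close>
    "(\<forall>A :: ('a, 'f) talg. rho_dim S ar A \<longleftrightarrow> Mod S (Str S ar) A)
     \<comment> \<open>closure under t-homomorphic images\<close>
     \<and> (\<forall>(A :: ('a, 'f) talg) (B :: ('b, 'f) talg) f.
          rho_dim S ar A \<and> is_talg S B \<and> t_hom_onto S A B f \<longrightarrow> rho_dim S ar B)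
     \<comment> \<open>closure under t-subalgebras\<close>
     \<and> (\<forall>(A :: ('a, 'f) talg) B. rho_dim S ar A \<and> t_subalg S B A \<longrightarrow> rho_dim S ar B)
     \<comment> \<open>closure under t-products\<close>
     \<and> (\<forall>(I :: 'i set) (F :: 'i \<Rightarrow> ('c, 'f) talg).
          (\<forall>j\<in>I. rho_dim S ar (F j)) \<longrightarrow> rho_dim S ar (t_prod I F))
     \<comment> \<open>the Et-property\<close>
     \<and> (\<forall>A :: ('a, 'f) talg. is_talg S A \<and> (\<forall>s\<in>ttr A. rho_dim S ar (gen_alg S A s))
          \<longrightarrow> rho_dim S ar A)"
  apply (intro conjI allI impI)
       apply (rule iffI, erule part1_fwd, erule part1_rev)
      apply (blast intro: part2)
     apply (blast intro: part3)
    apply (erule part4)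
  apply (blast intro: part5)
  done

end
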